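(* Let $\mathcal{C}$ be an exact-repair regenerating code with parameters $\{(n,k,d)=(4,3,3),(\alpha,\beta),B\}$. If $\frac{3}{2}\beta<\alpha<3\beta$, then $$3B\le 4\alpha+6\beta .$$
   Context: An exact-repair regenerating code with parameters $\{(n,k,d),(\alpha,\beta),B\}$: a file $M$ uniformly distributed over $\mathbb{F}_q^B$ (entropies measured in units of $\log q$); node $i\in[n]$ stores $W_i$, a deterministic function of $M$, with $H(W_i)\le\alpha$; (data collection) for every $K\subseteq[n]$ with $|K|=k$, $M$ is a function of $(W_a)_{a\in K}$; (exact repair) for every node $y$ and every set $D\subseteq[n]\setminus\{y\}$ with $|D|=d$, each $x\in D$ sends helper data, a deterministic function of $W_x$ of entropy at most $\beta$, from which $W_y$ is exactly recoverable. *)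

theory Defs
  imports Complex_Main "HOL-Library.FuncSet"
begin

definition file_space :: "nat \<Rightarrow> (nat \<Rightarrow> 'a::{finite,field}) set" where
  "file_space B = PiE {..<B} (\<lambda>_. UNIV)"

definition unif_entropy :: "real \<Rightarrow> 'm set \<Rightarrow> ('m \<Rightarrow> 'v) \<Rightarrow> real" where
  "unif_entropy b S f =
     (\<Sum>y\<in>f ` S. let p = real (card {x\<in>S. f x = y}) / real (card S) in - p * log b p)"

text \<open>Entropy in units of log q, with M uniform over F_q^B.\<close>
definition Hq :: "nat \<Rightarrow> ((nat \<Rightarrow> 'a::{finite,field}) \<Rightarrow> 'v) \<Rightarrow> real" where
  "Hq B f = unif_entropy (real (card (UNIV :: 'a set))) (file_space B :: (nat \<Rightarrow> 'a) set) f"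

text \<open>Nodes are 1..n; W i is the (deterministic) content of node i as a function of the file;
  h y D x is the helper function node x applies to its content when repairing node y
  with helper set D.\<close>
definition exact_repair_code ::
  "nat \<Rightarrow> nat \<Rightarrow> nat \<Rightarrow> real \<Rightarrow> real \<Rightarrow> nat \<Rightarrow>
   (nat \<Rightarrow> (nat \<Rightarrow> 'a::{finite,field}) \<Rightarrow> 'w) \<Rightarrow>
   (nat \<Rightarrow> nat set \<Rightarrow> nat \<Rightarrow> 'w \<Rightarrow> 'h) \<Rightarrow> bool" where
  "exact_repair_code n k d \<alpha> \<beta> B W h \<longleftrightarrow>
     (\<forall>i\<in>{1..n}. Hq B (W i) \<le> \<alpha>) \<and>
     (\<forall>K. K \<subseteq> {1..n} \<and> card K = k \<longrightarrow>
        (\<exists>g. \<forall>m\<in>file_space B. g (\<lambda>a\<in>K. W a m) = m)) \<and>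
     (\<forall>y\<in>{1..n}. \<forall>D. D \<subseteq> {1..n} - {y} \<and> card D = d \<longrightarrow>
        (\<forall>x\<in>D. Hq B (\<lambda>m. h y D x (W x m)) \<le> \<beta>) \<and>
        (\<exists>g. \<forall>m\<in>file_space B. g (\<lambda>x\<in>D. h y D x (W x m)) = W y m))"

end

theory Submission
  imports Defs
begin


definition cnt :: "'m set \<Rightarrow> ('m \<Rightarrow> 'v) \<Rightarrow> 'm \<Rightarrow> nat" where
  "cnt S f m = card {x\<in>S. f x = f m}"

lemma cnt_pos: "finite S \<Longrightarrow> m \<in> S \<Longrightarrow> 0 < cnt S f m"
  unfolding cnt_def by (subst card_gt_0_iff) auto

lemma cnt_le: "finite S \<Longrightarrow> cnt S f m \<le> card S"
  unfolding cnt_def by (intro card_mono) auto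

lemma ue_formula:
  assumes S: "finite S" "S \<noteq> {}" and b: "b > 1"
  shows "unif_entropy b S f = (\<Sum>m\<in>S. log b (card S) - log b (cnt S f m)) / card S"
proof -
  have N: "real (card S) > 0" using S by (simp add: card_gt_0_iff)
  have "(\<Sum>m\<in>S. log b (card S) - log b (cnt S f m)) =
        (\<Sum>y\<in>f ` S. \<Sum>m\<in>{x\<in>S. f x = y}. log b (card S) - log b (cnt S f m))"
    by (rule sum.image_gen[OF S(1)])
  also have "\<dots> = (\<Sum>y\<in>f ` S. real (card {x\<in>S. f x = y}) * (log b (card S) - log b (card {x\<in>S. f x = y})))"
  proof (rule sum.cong[OF refl])
    fix y assume "y \<in> f ` S"
    have "(\<Sum>m\<in>{x\<in>S. f x = y}. log b (card S) - log b (cnt S f m)) =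
          (\<Sum>m\<in>{x\<in>S. f x = y}. log b (card S) - log b (card {x\<in>S. f x = y}))"
      by (rule sum.cong) (auto simp: cnt_def)
    then show "(\<Sum>m\<in>{x\<in>S. f x = y}. log b (card S) - log b (cnt S f m)) =
          real (card {x\<in>S. f x = y}) * (log b (card S) - log b (card {x\<in>S. f x = y}))"
      by simp
  qed
  finally have eq: "(\<Sum>m\<in>S. log b (card S) - log b (cnt S f m)) = \<dots>" .
  have "unif_entropy b S f = (\<Sum>y\<in>f ` S. real (card {x\<in>S. f x = y}) * (log b (card S) - log b (card {x\<in>S. f x = y})) / card S)"
    unfolding unif_entropy_def Let_def
  proof (rule sum.cong[OF refl])
    fix y assume y: "y \<in> f ` S"
    have c: "real (card {x\<in>S. f x = y}) > 0" using y S by (auto simp: card_gt_0_iff)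
    show "- (real (card {x \<in> S. f x = y}) / real (card S)) * log b (real (card {x \<in> S. f x = y}) / real (card S)) =
      real (card {x\<in>S. f x = y}) * (log b (card S) - log b (card {x\<in>S. f x = y})) / card S"
      using c N b by (simp add: log_divide field_simps)
  qed
  also have "\<dots> = (\<Sum>y\<in>f ` S. real (card {x\<in>S. f x = y}) * (log b (card S) - log b (card {x\<in>S. f x = y}))) / card S"
    by (rule sum_divide_distrib[symmetric])
  also have "\<dots> = (\<Sum>m\<in>S. log b (card S) - log b (cnt S f m)) / card S"
    by (simp only: eq)
  finally show ?thesis .
qed

lemma ue_mono:
  assumes S: "finite S" "S \<noteq> {}" and b: "b > 1"
    and fg: "\<forall>x\<in>S. \<forall>y\<in>S. g x = g y \<longrightarrow> f x = f y"
  shows "unif_entropy b S f \<le> unif_entropy b S g"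
proof -
  have "(\<Sum>m\<in>S. log b (card S) - log b (cnt S f m)) \<le> (\<Sum>m\<in>S. log b (card S) - log b (cnt S g m))"
  proof (rule sum_mono)
    fix m assume m: "m \<in> S"
    have sub: "{x\<in>S. g x = g m} \<subseteq> {x\<in>S. f x = f m}" using fg m by blast
    have "cnt S g m \<le> cnt S f m" unfolding cnt_def
      using S(1) sub by (intro card_mono) auto
    then have le: "real (cnt S g m) \<le> real (cnt S f m)" by simp
    have p1: "0 < real (cnt S g m)" using cnt_pos[OF S(1) m] by simp
    have p2: "0 < real (cnt S f m)" using cnt_pos[OF S(1) m] by simp
    have "log b (cnt S g m) \<le> log b (cnt S f m)" using log_le_cancel_iff[OF b p1 p2] le by simp
    then show "log b (card S) - log b (cnt S f m) \<le> log b (card S) - log b (cnt S g m)"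
      by simp
  qed
  then show ?thesis unfolding ue_formula[OF S b] by (rule divide_right_mono) simp
qed

lemma ue_cong:
  assumes S: "finite S" "S \<noteq> {}" and b: "b > 1"
    and fg: "\<forall>x\<in>S. \<forall>y\<in>S. g x = g y \<longleftrightarrow> f x = f y"
  shows "unif_entropy b S f = unif_entropy b S g"
proof -
  have "\<forall>x\<in>S. \<forall>y\<in>S. g x = g y \<longrightarrow> f x = f y" using fg by blast
  moreover have "\<forall>x\<in>S. \<forall>y\<in>S. f x = f y \<longrightarrow> g x = g y" using fg by blast
  ultimately show ?thesis using ue_mono[OF S b, of g f] ue_mono[OF S b, of f g] by linarith
qed

lemma ue_nonneg:
  assumes S: "finite S" "S \<noteq> {}" and b: "b > 1"
  shows "0 \<le> unif_entropy b S f"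
proof -
  have "0 \<le> (\<Sum>m\<in>S. log b (card S) - log b (cnt S f m))"
  proof (rule sum_nonneg)
    fix m assume m: "m \<in> S"
    have le: "real (cnt S f m) \<le> real (card S)" using cnt_le[OF S(1)] by simp
    have p1: "0 < real (cnt S f m)" using cnt_pos[OF S(1) m] by simp
    have p2: "0 < real (card S)" using S by (simp add: card_gt_0_iff)
    have "log b (cnt S f m) \<le> log b (card S)" using log_le_cancel_iff[OF b p1 p2] le by simp
    then show "0 \<le> log b (card S) - log b (cnt S f m)" by simp
  qed
  then show ?thesis unfolding ue_formula[OF S b] by simp
qed



lemma ln_le_ratio:
  assumes "x > 0" "b > 1" shows "log b x \<le> (x - 1) / ln b"
proof -
  have "ln x \<le> x - 1" using assms ln_le_minus_one by blast
  moreover have "ln b > 0" using assms by simp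
  ultimately show ?thesis by (simp add: log_def divide_right_mono)
qed

lemma double_count:
  fixes a b c k :: "'m \<Rightarrow> 'v"
  assumes S: "finite S"
    and c: "\<forall>x\<in>S. \<forall>y\<in>S. c x = c y \<longleftrightarrow> (a x = a y \<and> b x = b y)"
    and ka: "\<forall>x\<in>S. \<forall>y\<in>S. a x = a y \<longrightarrow> k x = k y"
    and kb: "\<forall>x\<in>S. \<forall>y\<in>S. b x = b y \<longrightarrow> k x = k y"
  shows "(\<Sum>m\<in>S. real (cnt S a m) * cnt S b m / (cnt S c m * cnt S k m)) \<le> card S"
proof -
  define A where "A m = {x\<in>S. a x = a m}" for m
  define B where "B m = {x\<in>S. b x = b m}" for m
  define K where "K m = {x\<in>S. k x = k m}" for m
  have finA: "finite (A m)" "finite (B m)" "finite (K m)" for m using S by (auto simp: A_def B_def K_def)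
  have C: "{x\<in>S. c x = c m} = A m \<inter> B m" if "m \<in> S" for m
  proof -
    have cc: "x \<in> S \<Longrightarrow> (c x = c m) = (a x = a m \<and> b x = b m)" for x using c that by blast
    show ?thesis unfolding A_def B_def using cc by blast
  qed
  have "(\<Sum>m\<in>S. real (cnt S a m) * cnt S b m / (cnt S c m * cnt S k m))
      = (\<Sum>m\<in>S. \<Sum>p\<in>{p\<in>S\<times>S. fst p \<in> A m \<and> snd p \<in> B m}. 1 / (real (card (A m \<inter> B m)) * card (K m)))"
  proof (rule sum.cong[OF refl])
    fix m assume m: "m \<in> S"
    have "{p\<in>S\<times>S. fst p \<in> A m \<and> snd p \<in> B m} = A m \<times> B m" by (auto simp: A_def B_def)
    then show "real (cnt S a m) * cnt S b m / (cnt S c m * cnt S k m) =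
      (\<Sum>p\<in>{p\<in>S\<times>S. fst p \<in> A m \<and> snd p \<in> B m}. 1 / (real (card (A m \<inter> B m)) * card (K m)))"
      using C[OF m] by (simp add: cnt_def A_def B_def K_def card_cartesian_product)
  qed
  also have "\<dots> = (\<Sum>p\<in>S\<times>S. \<Sum>m\<in>{m\<in>S. fst p \<in> A m \<and> snd p \<in> B m}. 1 / (real (card (A m \<inter> B m)) * card (K m)))"
    using S by (intro sum.swap_restrict) auto
  also have "\<dots> \<le> (\<Sum>p\<in>S\<times>S. if snd p \<in> K (fst p) then 1 / real (card (K (fst p))) else 0)"
  proof (rule sum_mono)
    fix p assume p: "p \<in> S \<times> S"
    obtain m1 m2 where pm: "p = (m1, m2)" and m1: "m1 \<in> S" and m2: "m2 \<in> S" using p by auto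
    have setq: "{m\<in>S. fst p \<in> A m \<and> snd p \<in> B m} = A m1 \<inter> B m2"
      using m1 m2 by (auto simp: A_def B_def pm)
    have inner: "(\<Sum>m\<in>A m1 \<inter> B m2. 1 / (real (card (A m \<inter> B m)) * card (K m))) =
          (\<Sum>m\<in>A m1 \<inter> B m2. 1 / (real (card (A m1 \<inter> B m2)) * card (K m1)))"
    proof (rule sum.cong[OF refl])
      fix m assume "m \<in> A m1 \<inter> B m2"
      then have mm: "m \<in> S" "a m = a m1" "b m = b m2" by (auto simp: A_def B_def)
      have "k m = k m1" using ka mm(1,2) m1 by blast
      then have "A m = A m1" "B m = B m2" "K m = K m1"
        using mm by (simp_all add: A_def B_def K_def)
      then show "1 / (real (card (A m \<inter> B m)) * card (K m)) = 1 / (real (card (A m1 \<inter> B m2)) * card (K m1))"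
        by simp
    qed
    show "(\<Sum>m\<in>{m\<in>S. fst p \<in> A m \<and> snd p \<in> B m}. 1 / (real (card (A m \<inter> B m)) * card (K m)))
        \<le> (if snd p \<in> K (fst p) then 1 / real (card (K (fst p))) else 0)"
    proof (cases "A m1 \<inter> B m2 = {}")
      case True
      then show ?thesis unfolding setq by simp
    next
      case False
      then obtain z where z: "z \<in> A m1" "z \<in> B m2" by auto
      have z2: "z \<in> S" "a z = a m1" "b z = b m2" using z by (auto simp: A_def B_def)
      have "k z = k m1" using ka z2(1,2) m1 by blast
      moreover have "k z = k m2" using kb z2(1,3) m2 by blast
      ultimately have "k m2 = k m1" by simp
      then have inK: "m2 \<in> K m1" using m2 by (auto simp: K_def)
      have cz: "card (A m1 \<inter> B m2) > 0" using False finA by (simp add: card_gt_0_iff)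
      have "(\<Sum>m\<in>A m1 \<inter> B m2. 1 / (real (card (A m1 \<inter> B m2)) * card (K m1))) = 1 / card (K m1)"
        using cz by simp
      then show ?thesis unfolding setq inner using inK pm by simp
    qed
  qed
  also have "\<dots> = (\<Sum>m1\<in>S. \<Sum>m2\<in>S. if m2 \<in> K m1 then 1 / real (card (K m1)) else 0)"
    by (simp add: sum.cartesian_product split_def)
  also have "\<dots> = (\<Sum>m1\<in>S. 1)"
  proof (rule sum.cong[OF refl])
    fix m1 assume m1: "m1 \<in> S"
    have "(\<Sum>m2\<in>S. if m2 \<in> K m1 then 1 / real (card (K m1)) else 0) = (\<Sum>m2\<in>K m1. 1 / real (card (K m1)))"
    proof -
      have "{x\<in>S. x \<in> K m1} = K m1" by (auto simp: K_def)
      then show ?thesis using sum.inter_filter[OF S, of "\<lambda>_. 1 / real (card (K m1))" "\<lambda>x. x \<in> K m1"] by simp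
    qed
    also have "\<dots> = 1"
    proof -
      have "m1 \<in> K m1" using m1 by (simp add: K_def)
      then have "card (K m1) > 0" by (metis card_gt_0_iff empty_iff finA(3))
      then show ?thesis by simp
    qed
    finally show "(\<Sum>m2\<in>S. if m2 \<in> K m1 then 1 / real (card (K m1)) else 0) = 1" .
  qed
  also have "\<dots> = card S" by simp
  finally show ?thesis .
qed


lemma ue_submod:
  fixes a b c k :: "'m \<Rightarrow> 'v"
  assumes S: "finite S" "S \<noteq> {}" and bb: "bb > 1"
    and c: "\<forall>x\<in>S. \<forall>y\<in>S. c x = c y \<longleftrightarrow> (a x = a y \<and> b x = b y)"
    and ka: "\<forall>x\<in>S. \<forall>y\<in>S. a x = a y \<longrightarrow> k x = k y"
    and kb: "\<forall>x\<in>S. \<forall>y\<in>S. b x = b y \<longrightarrow> k x = k y"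
  shows "unif_entropy bb S c + unif_entropy bb S k \<le> unif_entropy bb S a + unif_entropy bb S b"
proof -
  define r where "r m = real (cnt S a m) * cnt S b m / (cnt S c m * cnt S k m)" for m
  have pos: "0 < real (cnt S f m)" if "m \<in> S" for f :: "'m \<Rightarrow> 'v" and m
    using cnt_pos[OF S(1) that] by simp
  have lr: "log bb (cnt S a m) + log bb (cnt S b m) - log bb (cnt S c m) - log bb (cnt S k m) = log bb (r m)"
    if m: "m \<in> S" for m
  proof -
    have "log bb (r m) = log bb (real (cnt S a m) * cnt S b m) - log bb (real (cnt S c m) * cnt S k m)"
      unfolding r_def of_nat_mult using pos[OF m, of a] pos[OF m, of b] pos[OF m, of c] pos[OF m, of k] bb
      by (simp add: log_divide)
    also have "\<dots> = log bb (cnt S a m) + log bb (cnt S b m) - (log bb (cnt S c m) + log bb (cnt S k m))"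
      using pos[OF m, of a] pos[OF m, of b] pos[OF m, of c] pos[OF m, of k] bb by (simp add: log_mult)
    finally show ?thesis by simp
  qed
  have rpos: "0 < r m" if "m \<in> S" for m unfolding r_def using pos[OF that] by simp
  have lnb: "ln bb > 0" using bb by simp
  have "(\<Sum>m\<in>S. log bb (cnt S a m) + log bb (cnt S b m) - log bb (cnt S c m) - log bb (cnt S k m))
      = (\<Sum>m\<in>S. log bb (r m))" by (rule sum.cong[OF refl]) (rule lr)
  also have "\<dots> \<le> (\<Sum>m\<in>S. (r m - 1) / ln bb)"
    by (rule sum_mono) (rule ln_le_ratio[OF rpos bb])
  also have "\<dots> = ((\<Sum>m\<in>S. r m) - card S) / ln bb"
    by (simp add: sum_divide_distrib[symmetric] sum_subtractf)
  also have "\<dots> \<le> 0"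
  proof -
    have "(\<Sum>m\<in>S. r m) \<le> card S" unfolding r_def by (rule double_count[OF S(1) c ka kb])
    then show ?thesis using lnb by (simp add: divide_nonpos_pos)
  qed
  finally have key: "(\<Sum>m\<in>S. log bb (cnt S a m) + log bb (cnt S b m) - log bb (cnt S c m) - log bb (cnt S k m)) \<le> 0" .
  let ?L = "\<lambda>f. (\<Sum>m\<in>S. log bb (card S) - log bb (cnt S f m))"
  have "?L c + ?L k - ?L a - ?L b = (\<Sum>m\<in>S. log bb (cnt S a m) + log bb (cnt S b m) - log bb (cnt S c m) - log bb (cnt S k m))"
    by (simp add: sum_subtractf sum.distrib[symmetric] algebra_simps)
  then have "?L c + ?L k \<le> ?L a + ?L b" using key by linarith
  then have "(?L c + ?L k) / card S \<le> (?L a + ?L b) / card S"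
    by (rule divide_right_mono) simp
  then show ?thesis unfolding ue_formula[OF S bb] by (simp add: add_divide_distrib)
qed



lemma card_field_gt1: "card (UNIV :: 'a::{finite,field} set) > 1"
proof -
  have "card {0::'a, 1} = 2" by simp
  moreover have "card {0::'a, 1} \<le> card (UNIV :: 'a set)" by (rule card_mono) auto
  ultimately show ?thesis by simp
qed

locale rc =
  fixes W :: "nat \<Rightarrow> (nat \<Rightarrow> 'a::{finite,field}) \<Rightarrow> 'w"
    and h :: "nat \<Rightarrow> nat set \<Rightarrow> nat \<Rightarrow> 'w \<Rightarrow> 'h"
    and \<alpha> \<beta> :: real and B :: nat
  assumes code: "exact_repair_code 4 3 3 \<alpha> \<beta> B W h"
begin

abbreviation "SS \<equiv> (file_space B :: (nat \<Rightarrow> 'a) set)"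

lemma bb_gt1: "real (card (UNIV :: 'a set)) > 1"
  using card_field_gt1[where 'a='a] by simp

lemma code_alpha: "\<forall>i\<in>{1..4}. Hq B (W i) \<le> \<alpha>"
  using code unfolding exact_repair_code_def by (rule conjunct1)
lemma code_dc: "\<forall>K. K \<subseteq> {1..4} \<and> card K = 3 \<longrightarrow> (\<exists>g. \<forall>m\<in>file_space B. g (\<lambda>a\<in>K. W a m) = m)"
  using code unfolding exact_repair_code_def by (rule conjunct1[OF conjunct2])
lemma code_rep: "\<forall>y\<in>{1..4}. \<forall>D. D \<subseteq> {1..4} - {y} \<and> card D = 3 \<longrightarrow>
        (\<forall>x\<in>D. Hq B (\<lambda>m. h y D x (W x m)) \<le> \<beta>) \<and>
        (\<exists>g. \<forall>m\<in>file_space B. g (\<lambda>x\<in>D. h y D x (W x m)) = W y m)"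
  using code unfolding exact_repair_code_def by (rule conjunct2[OF conjunct2])

lemma SS_fin: "finite SS" unfolding file_space_def by (intro finite_PiE) auto
lemma SS_ne: "SS \<noteq> {}" unfolding file_space_def by (simp add: PiE_eq_empty_iff)

definition val :: "nat \<Rightarrow> (nat \<Rightarrow> 'a) \<Rightarrow> 'w + 'h" where
  "val e m = (if e < 4 then Inl (W (e+1) m) else
     Inr (h (((e-4) mod 4)+1) ({1..4} - {((e-4) mod 4)+1}) (((e-4) div 4)+1) (W (((e-4) div 4)+1) m)))"

definition R :: "nat \<Rightarrow> (nat \<Rightarrow> 'a) \<Rightarrow> nat \<Rightarrow> 'w + 'h" where
  "R n m = (\<lambda>e. if bit n e then val e m else Inl undefined)"

definition ent :: "nat \<Rightarrow> real" where
  "ent n = Hq B (R n)"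

lemma R_eq: "R n m = R n m' \<longleftrightarrow> (\<forall>e. bit n e \<longrightarrow> val e m = val e m')"
  unfolding R_def fun_eq_iff by (metis (full_types))

lemma ent_submod: "ent (or x y) + ent (and x y) \<le> ent x + ent y"
  unfolding ent_def Hq_def
proof (rule ue_submod[OF SS_fin SS_ne bb_gt1])
  show "\<forall>m\<in>SS. \<forall>m'\<in>SS. R (or x y) m = R (or x y) m' \<longleftrightarrow> (R x m = R x m' \<and> R y m = R y m')"
    unfolding R_eq bit_or_iff by blast
  show "\<forall>m\<in>SS. \<forall>m'\<in>SS. R x m = R x m' \<longrightarrow> R (and x y) m = R (and x y) m'"
    unfolding R_eq bit_and_iff by blast
  show "\<forall>m\<in>SS. \<forall>m'\<in>SS. R y m = R y m' \<longrightarrow> R (and x y) m = R (and x y) m'"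
    unfolding R_eq bit_and_iff by blast
qed

lemma ent_mono: "and x y = x \<Longrightarrow> ent x \<le> ent y"
  unfolding ent_def Hq_def
proof (rule ue_mono[OF SS_fin SS_ne bb_gt1])
  assume xy: "and x y = x"
  have "bit x e \<Longrightarrow> bit y e" for e by (metis bit_and_iff xy)
  then show "\<forall>m\<in>SS. \<forall>m'\<in>SS. R y m = R y m' \<longrightarrow> R x m = R x m'"
    unfolding R_eq by blast
qed

definition det :: "nat \<Rightarrow> nat \<Rightarrow> bool" where
  "det x e \<longleftrightarrow> (\<forall>m\<in>SS. \<forall>m'\<in>SS. R x m = R x m' \<longrightarrow> val e m = val e m')"

lemma det_mono: "det x e \<Longrightarrow> and x y = x \<Longrightarrow> det y e"
proof -
  assume d: "det x e" and xy: "and x y = x"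
  have "bit x i \<Longrightarrow> bit y i" for i by (metis bit_and_iff xy)
  then show "det y e" using d unfolding det_def R_eq by blast
qed

lemma ent_add: "det x e \<Longrightarrow> ent (or x (2^e)) = ent x"
  unfolding ent_def Hq_def
proof (rule ue_cong[OF SS_fin SS_ne bb_gt1])
  assume d: "det x e"
  show "\<forall>m\<in>SS. \<forall>m'\<in>SS. R x m = R x m' \<longleftrightarrow> R (or x (2^e)) m = R (or x (2^e)) m'"
  proof (intro ballI iffI)
    fix m m' assume m: "m \<in> SS" "m' \<in> SS" and eq: "R x m = R x m'"
    have "val e m = val e m'" using d m eq unfolding det_def by blast
    then show "R (or x (2^e)) m = R (or x (2^e)) m'" using eq unfolding R_eq bit_or_iff bit_exp_iff
      by auto
  next
    fix m m' assume "R (or x (2^e)) m = R (or x (2^e)) m'"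
    then show "R x m = R x m'" unfolding R_eq bit_or_iff by blast
  qed
qed


lemma val_W: "1 \<le> i \<Longrightarrow> i \<le> 4 \<Longrightarrow> val (i-1) m = Inl (W i m)"
  unfolding val_def by simp

lemma val_S: "1 \<le> i \<Longrightarrow> 1 \<le> j \<Longrightarrow> j \<le> 4 \<Longrightarrow>
   val (4+4*(i-1)+(j-1)) m = Inr (h j ({1..4} - {j}) i (W i m))"
proof -
  assume a: "1 \<le> i" "1 \<le> j" "j \<le> 4"
  have k: "j - 1 < 4" using a by simp
  have "(4*(i-1)+(j-1)) mod 4 = (j-1) mod 4" by (rule mod_mult_self4)
  then have m1: "(4*(i-1)+(j-1)) mod 4 = j - 1" using k by simp
  have "(4*(i-1)+(j-1)) div 4 = (i-1) + (j-1) div 4" by (rule div_mult_self4) simp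
  then have m2: "(4*(i-1)+(j-1)) div 4 = i - 1" using k by simp
  note m1 m2
  have "\<not> (4+4*(i-1)+(j-1)) < (4::nat)" by simp
  moreover have "(4+4*(i-1)+(j-1)) - 4 = 4*(i-1)+(j-1)" by simp
  ultimately show ?thesis unfolding val_def using m1 m2 a by simp
qed

lemma det_WS: "1 \<le> i \<Longrightarrow> i \<le> 4 \<Longrightarrow> 1 \<le> j \<Longrightarrow> j \<le> 4 \<Longrightarrow> det (2^(i-1)) (4+4*(i-1)+(j-1))"
  unfolding det_def R_eq
proof (intro ballI impI)
  fix m m' assume a: "1 \<le> i" "i \<le> 4" "1 \<le> j" "j \<le> 4"
    and eq: "\<forall>e. bit ((2::nat)^(i-1)) e \<longrightarrow> val e m = val e m'"
  have "val (i-1) m = val (i-1) m'" using eq by (simp add: bit_exp_iff)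
  then have "W i m = W i m'" using val_W[OF a(1,2)] by simp
  then show "val (4+4*(i-1)+(j-1)) m = val (4+4*(i-1)+(j-1)) m'" using val_S a by simp
qed

lemma repair:
  assumes j: "j \<in> {1..4}" and D: "{1..4} - {j} = {a,b,c}"
    and bits: "bit n (4+4*(a-1)+(j-1))" "bit n (4+4*(b-1)+(j-1))" "bit n (4+4*(c-1)+(j-1))"
  shows "det n (j-1)"
  unfolding det_def R_eq
proof (intro ballI impI)
  fix m m' assume m: "m \<in> SS" "m' \<in> SS" and eq: "\<forall>e. bit n e \<longrightarrow> val e m = val e m'"
  let ?D = "{1..4::nat} - {j}"
  have "?D \<subseteq> {1..4} - {j} \<and> card ?D = 3" using j by (auto simp: card_Diff_singleton)
  then obtain g where g: "\<forall>m\<in>SS. g (\<lambda>x\<in>?D. h j ?D x (W x m)) = W j m"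
    using code_rep j by (meson conjunct2)
  have "h j ?D x (W x m) = h j ?D x (W x m')" if x: "x \<in> ?D" for x
  proof -
    have xr: "1 \<le> x" "x \<le> 4" using x by auto
    have "bit n (4+4*(x-1)+(j-1))" using x bits unfolding D by auto
    then have "val (4+4*(x-1)+(j-1)) m = val (4+4*(x-1)+(j-1)) m'" using eq by blast
    then show ?thesis using val_S[OF xr(1)] j by auto
  qed
  then have "(\<lambda>x\<in>?D. h j ?D x (W x m)) = (\<lambda>x\<in>?D. h j ?D x (W x m'))" by (intro restrict_ext) auto
  then have "W j m = W j m'" using g m by metis
  then show "val (j-1) m = val (j-1) m'" using val_W j by auto
qed

lemma recover:
  assumes K: "{a,b,c} \<subseteq> {1..4::nat}" "card {a,b,c} = 3"
    and bits: "bit n (a-1)" "bit n (b-1)" "bit n (c-1)"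
    and m: "m \<in> SS" "m' \<in> SS" and eq: "R n m = R n m'"
  shows "m = m'"
proof -
  obtain g where g: "\<forall>m\<in>SS. g (\<lambda>x\<in>{a,b,c}. W x m) = m"
    using code_dc K by meson
  have "W x m = W x m'" if x: "x \<in> {a,b,c}" for x
  proof -
    have xr: "1 \<le> x" "x \<le> 4" using x K by auto
    have "bit n (x-1)" using x bits by auto
    then have "val (x-1) m = val (x-1) m'" using eq unfolding R_eq by blast
    then show ?thesis using val_W[OF xr] by simp
  qed
  then have "(\<lambda>x\<in>{a,b,c}. W x m) = (\<lambda>x\<in>{a,b,c}. W x m')" by (intro restrict_ext) auto
  then show ?thesis using g m by metis
qed

lemma det_full:
  assumes K: "{a,b,c} \<subseteq> {1..4::nat}" "card {a,b,c} = 3"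
    and bits: "bit n (a-1)" "bit n (b-1)" "bit n (c-1)"
  shows "det n e"
  unfolding det_def using recover[OF K bits] by blast

lemma card_SS: "card SS = card (UNIV :: 'a set) ^ B"
  unfolding file_space_def by (simp add: card_PiE)

lemma ent_full:
  assumes K: "{a,b,c} \<subseteq> {1..4::nat}" "card {a,b,c} = 3"
    and bits: "bit n (a-1)" "bit n (b-1)" "bit n (c-1)"
  shows "ent n = B"
proof -
  have "ent n = unif_entropy (real (card (UNIV :: 'a set))) SS (\<lambda>m. m)"
    unfolding ent_def Hq_def
  proof (rule ue_cong[OF SS_fin SS_ne bb_gt1])
    show "\<forall>x\<in>SS. \<forall>y\<in>SS. (x = y) = (R n x = R n y)"
      using recover[OF K bits] by blast
  qed
  also have "\<dots> = (\<Sum>m\<in>SS. log (real (card (UNIV :: 'a set))) (card SS) - log (real (card (UNIV :: 'a set))) 1) / card SS"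
    unfolding ue_formula[OF SS_fin SS_ne bb_gt1]
  proof -
    have "cnt SS (\<lambda>m. m) m = 1" if "m \<in> SS" for m
    proof -
      have "{x\<in>SS. x = m} = {m}" using that by auto
      then show ?thesis unfolding cnt_def by simp
    qed
    then show "(\<Sum>m\<in>SS. log (real (card (UNIV :: 'a set))) (real (card SS)) - log (real (card (UNIV :: 'a set))) (real (cnt SS (\<lambda>m. m) m))) / real (card SS) =
      (\<Sum>m\<in>SS. log (real (card (UNIV :: 'a set))) (real (card SS)) - log (real (card (UNIV :: 'a set))) 1) / real (card SS)"
      by (metis (no_types, lifting) of_nat_1 sum.cong)
  qed
  also have "\<dots> = log (real (card (UNIV :: 'a set))) (card SS)"
    using SS_fin SS_ne by (simp add: card_gt_0_iff)
  also have "\<dots> = B" unfolding card_SS using bb_gt1 by (simp add: log_nat_power)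
  finally show ?thesis .
qed

lemma ent_W: "1 \<le> i \<Longrightarrow> i \<le> 4 \<Longrightarrow> ent (2^(i-1)) \<le> \<alpha>"
proof -
  assume i: "1 \<le> i" "i \<le> 4"
  have "ent (2^(i-1)) = Hq B (W i)"
    unfolding ent_def Hq_def
  proof (rule ue_cong[OF SS_fin SS_ne bb_gt1])
    show "\<forall>x\<in>SS. \<forall>y\<in>SS. (W i x = W i y) = (R (2^(i-1)) x = R (2^(i-1)) y)"
      unfolding R_eq using val_W[OF i] by (auto simp: bit_exp_iff)
  qed
  also have "\<dots> \<le> \<alpha>" using code_alpha i by simp
  finally show ?thesis .
qed

lemma ent_S: "1 \<le> i \<Longrightarrow> i \<le> 4 \<Longrightarrow> 1 \<le> j \<Longrightarrow> j \<le> 4 \<Longrightarrow> i \<noteq> j \<Longrightarrow>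
    ent (2^(4+4*(i-1)+(j-1))) \<le> \<beta>"
proof -
  assume i: "1 \<le> i" "i \<le> 4" and j: "1 \<le> j" "j \<le> 4" and ij: "i \<noteq> j"
  let ?D = "{1..4::nat} - {j}"
  have "ent (2^(4+4*(i-1)+(j-1))) = Hq B (\<lambda>m. h j ?D i (W i m))"
    unfolding ent_def Hq_def
  proof (rule ue_cong[OF SS_fin SS_ne bb_gt1])
    show "\<forall>x\<in>SS. \<forall>y\<in>SS. (h j ?D i (W i x) = h j ?D i (W i y)) =
       (R (2^(4+4*(i-1)+(j-1))) x = R (2^(4+4*(i-1)+(j-1))) y)"
      unfolding R_eq using val_S[OF i(1) j] by (auto simp: bit_exp_iff)
  qed
  also have "\<dots> \<le> \<beta>"
  proof -
    have "?D \<subseteq> {1..4} - {j} \<and> card ?D = 3" using j by (auto simp: card_Diff_singleton)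
    moreover have "i \<in> ?D" using i ij by auto
    moreover have "j \<in> {1..4}" using j by auto
    ultimately show ?thesis using code_rep by (meson conjunct1)
  qed
  finally show ?thesis .
qed


lemma ent_nonneg: "0 \<le> ent n"
  unfolding ent_def Hq_def by (rule ue_nonneg[OF SS_fin SS_ne bb_gt1])

lemma D1: "{1..4::nat} - {1} = {2,3,4}" by auto
lemma D2: "{1..4::nat} - {2} = {1,3,4}" by auto
lemma D3: "{1..4::nat} - {3} = {1,2,4}" by auto
lemma D4: "{1..4::nat} - {4} = {1,2,3}" by auto

lemma rep1: assumes "bit n 8" "bit n 12" "bit n 16" shows "det n 0"
proof -
  have "det n (1-1)" by (rule repair[of 1 2 3 4 n]) (use assms D1 in simp_all)
  then show ?thesis by simp
qed

lemma rep2: assumes "bit n 5" "bit n 13" "bit n 17" shows "det n 1"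
proof -
  have "det n (2-1)" by (rule repair[of 2 1 3 4 n]) (use assms D2 in simp_all)
  then show ?thesis by simp
qed

lemma rep3: assumes "bit n 6" "bit n 10" "bit n 18" shows "det n 2"
proof -
  have "det n (3-1)" by (rule repair[of 3 1 2 4 n]) (use assms D3 in simp_all)
  then show ?thesis by simp
qed

lemma rep4: assumes "bit n 7" "bit n 11" "bit n 15" shows "det n 3"
proof -
  have "det n (4-1)" by (rule repair[of 4 1 2 3 n]) (use assms D4 in simp_all)
  then show ?thesis by simp
qed

lemma clo_263169: "ent 263169 = ent 308453"
proof -
  have b0: "det 1 5" using det_WS[of 1 2] by simp
  have d0: "det 263169 5" by (rule det_mono[OF b0]) simp
  have s0: "ent 263201 = ent 263169" using ent_add[OF d0] by simp
  have b1: "det 1 6" using det_WS[of 1 3] by simp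
  have d1: "det 263201 6" by (rule det_mono[OF b1]) simp
  have s1: "ent 263265 = ent 263201" using ent_add[OF d1] by simp
  have b2: "det 1 7" using det_WS[of 1 4] by simp
  have d2: "det 263265 7" by (rule det_mono[OF b2]) simp
  have s2: "ent 263393 = ent 263265" using ent_add[OF d2] by simp
  have b3: "det 263232 2" by (rule rep3) (simp_all add: bit_iff_odd)
  have d3: "det 263393 2" by (rule det_mono[OF b3]) simp
  have s3: "ent 263397 = ent 263393" using ent_add[OF d3] by simp
  have b4: "det 4 12" using det_WS[of 3 1] by simp
  have d4: "det 263397 12" by (rule det_mono[OF b4]) simp
  have s4: "ent 267493 = ent 263397" using ent_add[OF d4] by simp
  have b5: "det 4 13" using det_WS[of 3 2] by simp
  have d5: "det 267493 13" by (rule det_mono[OF b5]) simp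
  have s5: "ent 275685 = ent 267493" using ent_add[OF d5] by simp
  have b6: "det 4 15" using det_WS[of 3 4] by simp
  have d6: "det 275685 15" by (rule det_mono[OF b6]) simp
  have s6: "ent 308453 = ent 275685" using ent_add[OF d6] by simp
  show ?thesis using s0 s1 s2 s3 s4 s5 s6 by linarith
qed

lemma clo_8: "ent 8 = ent 458760"
proof -
  have b0: "det 8 16" using det_WS[of 4 1] by simp
  have d0: "det 8 16" by (rule det_mono[OF b0]) simp
  have s0: "ent 65544 = ent 8" using ent_add[OF d0] by simp
  have b1: "det 8 17" using det_WS[of 4 2] by simp
  have d1: "det 65544 17" by (rule det_mono[OF b1]) simp
  have s1: "ent 196616 = ent 65544" using ent_add[OF d1] by simp
  have b2: "det 8 18" using det_WS[of 4 3] by simp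
  have d2: "det 196616 18" by (rule det_mono[OF b2]) simp
  have s2: "ent 458760 = ent 196616" using ent_add[OF d2] by simp
  show ?thesis using s0 s1 s2 by linarith
qed

lemma clo_499179: "ent 499179 = ent 507375"
proof -
  have b0: "det 263232 2" by (rule rep3) (simp_all add: bit_iff_odd)
  have d0: "det 499179 2" by (rule det_mono[OF b0]) simp
  have s0: "ent 499183 = ent 499179" using ent_add[OF d0] by simp
  have b1: "det 4 13" using det_WS[of 3 2] by simp
  have d1: "det 499183 13" by (rule det_mono[OF b1]) simp
  have s1: "ent 507375 = ent 499183" using ent_add[OF d1] by simp
  show ?thesis using s0 s1 by linarith
qed

lemma clo_441831: "ent 441831 = ent 507375"
proof -
  have b0: "det 34944 3" by (rule rep4) (simp_all add: bit_iff_odd)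
  have d0: "det 441831 3" by (rule det_mono[OF b0]) simp
  have s0: "ent 441839 = ent 441831" using ent_add[OF d0] by simp
  have b1: "det 8 16" using det_WS[of 4 1] by simp
  have d1: "det 441839 16" by (rule det_mono[OF b1]) simp
  have s1: "ent 507375 = ent 441839" using ent_add[OF d1] by simp
  show ?thesis using s0 s1 by linarith
qed

lemma clo_1096: "ent 1096 = ent 504908"
proof -
  have b0: "det 8 16" using det_WS[of 4 1] by simp
  have d0: "det 1096 16" by (rule det_mono[OF b0]) simp
  have s0: "ent 66632 = ent 1096" using ent_add[OF d0] by simp
  have b1: "det 8 17" using det_WS[of 4 2] by simp
  have d1: "det 66632 17" by (rule det_mono[OF b1]) simp
  have s1: "ent 197704 = ent 66632" using ent_add[OF d1] by simp
  have b2: "det 8 18" using det_WS[of 4 3] by simp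
  have d2: "det 197704 18" by (rule det_mono[OF b2]) simp
  have s2: "ent 459848 = ent 197704" using ent_add[OF d2] by simp
  have b3: "det 263232 2" by (rule rep3) (simp_all add: bit_iff_odd)
  have d3: "det 459848 2" by (rule det_mono[OF b3]) simp
  have s3: "ent 459852 = ent 459848" using ent_add[OF d3] by simp
  have b4: "det 4 12" using det_WS[of 3 1] by simp
  have d4: "det 459852 12" by (rule det_mono[OF b4]) simp
  have s4: "ent 463948 = ent 459852" using ent_add[OF d4] by simp
  have b5: "det 4 13" using det_WS[of 3 2] by simp
  have d5: "det 463948 13" by (rule det_mono[OF b5]) simp
  have s5: "ent 472140 = ent 463948" using ent_add[OF d5] by simp
  have b6: "det 4 15" using det_WS[of 3 4] by simp
  have d6: "det 472140 15" by (rule det_mono[OF b6]) simp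
  have s6: "ent 504908 = ent 472140" using ent_add[OF d6] by simp
  show ?thesis using s0 s1 s2 s3 s4 s5 s6 by linarith
qed

lemma clo_113926: "ent 113926 = ent 507375"
proof -
  have b0: "det 69888 0" by (rule rep1) (simp_all add: bit_iff_odd)
  have d0: "det 113926 0" by (rule det_mono[OF b0]) simp
  have s0: "ent 113927 = ent 113926" using ent_add[OF d0] by simp
  have b1: "det 1 5" using det_WS[of 1 2] by simp
  have d1: "det 113927 5" by (rule det_mono[OF b1]) simp
  have s1: "ent 113959 = ent 113927" using ent_add[OF d1] by simp
  have b2: "det 1 6" using det_WS[of 1 3] by simp
  have d2: "det 113959 6" by (rule det_mono[OF b2]) simp
  have s2: "ent 114023 = ent 113959" using ent_add[OF d2] by simp
  have b3: "det 1 7" using det_WS[of 1 4] by simp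
  have d3: "det 114023 7" by (rule det_mono[OF b3]) simp
  have s3: "ent 114151 = ent 114023" using ent_add[OF d3] by simp
  have b4: "det 34944 3" by (rule rep4) (simp_all add: bit_iff_odd)
  have d4: "det 114151 3" by (rule det_mono[OF b4]) simp
  have s4: "ent 114159 = ent 114151" using ent_add[OF d4] by simp
  have b5: "det 8 17" using det_WS[of 4 2] by simp
  have d5: "det 114159 17" by (rule det_mono[OF b5]) simp
  have s5: "ent 245231 = ent 114159" using ent_add[OF d5] by simp
  have b6: "det 8 18" using det_WS[of 4 3] by simp
  have d6: "det 245231 18" by (rule det_mono[OF b6]) simp
  have s6: "ent 507375 = ent 245231" using ent_add[OF d6] by simp
  show ?thesis using s0 s1 s2 s3 s4 s5 s6 by linarith
qed

lemma clo_65796: "ent 65796 = ent 111077"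
proof -
  have b0: "det 4 12" using det_WS[of 3 1] by simp
  have d0: "det 65796 12" by (rule det_mono[OF b0]) simp
  have s0: "ent 69892 = ent 65796" using ent_add[OF d0] by simp
  have b1: "det 4 13" using det_WS[of 3 2] by simp
  have d1: "det 69892 13" by (rule det_mono[OF b1]) simp
  have s1: "ent 78084 = ent 69892" using ent_add[OF d1] by simp
  have b2: "det 4 15" using det_WS[of 3 4] by simp
  have d2: "det 78084 15" by (rule det_mono[OF b2]) simp
  have s2: "ent 110852 = ent 78084" using ent_add[OF d2] by simp
  have b3: "det 69888 0" by (rule rep1) (simp_all add: bit_iff_odd)
  have d3: "det 110852 0" by (rule det_mono[OF b3]) simp
  have s3: "ent 110853 = ent 110852" using ent_add[OF d3] by simp
  have b4: "det 1 5" using det_WS[of 1 2] by simp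
  have d4: "det 110853 5" by (rule det_mono[OF b4]) simp
  have s4: "ent 110885 = ent 110853" using ent_add[OF d4] by simp
  have b5: "det 1 6" using det_WS[of 1 3] by simp
  have d5: "det 110885 6" by (rule det_mono[OF b5]) simp
  have s5: "ent 110949 = ent 110885" using ent_add[OF d5] by simp
  have b6: "det 1 7" using det_WS[of 1 4] by simp
  have d6: "det 110949 7" by (rule det_mono[OF b6]) simp
  have s6: "ent 111077 = ent 110949" using ent_add[OF d6] by simp
  show ?thesis using s0 s1 s2 s3 s4 s5 s6 by linarith
qed

lemma clo_113125: "ent 113125 = ent 507375"
proof -
  have b0: "det 34944 3" by (rule rep4) (simp_all add: bit_iff_odd)
  have d0: "det 113125 3" by (rule det_mono[OF b0]) simp
  have s0: "ent 113133 = ent 113125" using ent_add[OF d0] by simp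
  have b1: "det 8 17" using det_WS[of 4 2] by simp
  have d1: "det 113133 17" by (rule det_mono[OF b1]) simp
  have s1: "ent 244205 = ent 113133" using ent_add[OF d1] by simp
  have b2: "det 8 18" using det_WS[of 4 3] by simp
  have d2: "det 244205 18" by (rule det_mono[OF b2]) simp
  have s2: "ent 506349 = ent 244205" using ent_add[OF d2] by simp
  have b3: "det 139296 1" by (rule rep2) (simp_all add: bit_iff_odd)
  have d3: "det 506349 1" by (rule det_mono[OF b3]) simp
  have s3: "ent 506351 = ent 506349" using ent_add[OF d3] by simp
  have b4: "det 2 10" using det_WS[of 2 3] by simp
  have d4: "det 506351 10" by (rule det_mono[OF b4]) simp
  have s4: "ent 507375 = ent 506351" using ent_add[OF d4] by simp
  show ?thesis using s0 s1 s2 s3 s4 by linarith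
qed

lemma clo_69634: "ent 69634 = ent 73187"
proof -
  have b0: "det 2 8" using det_WS[of 2 1] by simp
  have d0: "det 69634 8" by (rule det_mono[OF b0]) simp
  have s0: "ent 69890 = ent 69634" using ent_add[OF d0] by simp
  have b1: "det 2 10" using det_WS[of 2 3] by simp
  have d1: "det 69890 10" by (rule det_mono[OF b1]) simp
  have s1: "ent 70914 = ent 69890" using ent_add[OF d1] by simp
  have b2: "det 2 11" using det_WS[of 2 4] by simp
  have d2: "det 70914 11" by (rule det_mono[OF b2]) simp
  have s2: "ent 72962 = ent 70914" using ent_add[OF d2] by simp
  have b3: "det 69888 0" by (rule rep1) (simp_all add: bit_iff_odd)
  have d3: "det 72962 0" by (rule det_mono[OF b3]) simp
  have s3: "ent 72963 = ent 72962" using ent_add[OF d3] by simp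
  have b4: "det 1 5" using det_WS[of 1 2] by simp
  have d4: "det 72963 5" by (rule det_mono[OF b4]) simp
  have s4: "ent 72995 = ent 72963" using ent_add[OF d4] by simp
  have b5: "det 1 6" using det_WS[of 1 3] by simp
  have d5: "det 72995 6" by (rule det_mono[OF b5]) simp
  have s5: "ent 73059 = ent 72995" using ent_add[OF d5] by simp
  have b6: "det 1 7" using det_WS[of 1 4] by simp
  have d6: "det 73059 7" by (rule det_mono[OF b6]) simp
  have s6: "ent 73187 = ent 73059" using ent_add[OF d6] by simp
  show ?thesis using s0 s1 s2 s3 s4 s5 s6 by linarith
qed

lemma clo_504940: "ent 504940 = ent 507375"
proof -
  have b0: "det 139296 1" by (rule rep2) (simp_all add: bit_iff_odd)
  have d0: "det 504940 1" by (rule det_mono[OF b0]) simp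
  have s0: "ent 504942 = ent 504940" using ent_add[OF d0] by simp
  have b1: "det 2 8" using det_WS[of 2 1] by simp
  have d1: "det 504942 8" by (rule det_mono[OF b1]) simp
  have s1: "ent 505198 = ent 504942" using ent_add[OF d1] by simp
  have b2: "det 2 11" using det_WS[of 2 4] by simp
  have d2: "det 505198 11" by (rule det_mono[OF b2]) simp
  have s2: "ent 507246 = ent 505198" using ent_add[OF d2] by simp
  have b3: "det 69888 0" by (rule rep1) (simp_all add: bit_iff_odd)
  have d3: "det 507246 0" by (rule det_mono[OF b3]) simp
  have s3: "ent 507247 = ent 507246" using ent_add[OF d3] by simp
  have b4: "det 1 7" using det_WS[of 1 4] by simp
  have d4: "det 507247 7" by (rule det_mono[OF b4]) simp
  have s4: "ent 507375 = ent 507247" using ent_add[OF d4] by simp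
  show ?thesis using s0 s1 s2 s3 s4 by linarith
qed

lemma clo_460009: "ent 460009 = ent 507375"
proof -
  have b0: "det 263232 2" by (rule rep3) (simp_all add: bit_iff_odd)
  have d0: "det 460009 2" by (rule det_mono[OF b0]) simp
  have s0: "ent 460013 = ent 460009" using ent_add[OF d0] by simp
  have b1: "det 4 12" using det_WS[of 3 1] by simp
  have d1: "det 460013 12" by (rule det_mono[OF b1]) simp
  have s1: "ent 464109 = ent 460013" using ent_add[OF d1] by simp
  have b2: "det 4 13" using det_WS[of 3 2] by simp
  have d2: "det 464109 13" by (rule det_mono[OF b2]) simp
  have s2: "ent 472301 = ent 464109" using ent_add[OF d2] by simp
  have b3: "det 4 15" using det_WS[of 3 4] by simp
  have d3: "det 472301 15" by (rule det_mono[OF b3]) simp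
  have s3: "ent 505069 = ent 472301" using ent_add[OF d3] by simp
  have b4: "det 139296 1" by (rule rep2) (simp_all add: bit_iff_odd)
  have d4: "det 505069 1" by (rule det_mono[OF b4]) simp
  have s4: "ent 505071 = ent 505069" using ent_add[OF d4] by simp
  have b5: "det 2 8" using det_WS[of 2 1] by simp
  have d5: "det 505071 8" by (rule det_mono[OF b5]) simp
  have s5: "ent 505327 = ent 505071" using ent_add[OF d5] by simp
  have b6: "det 2 11" using det_WS[of 2 4] by simp
  have d6: "det 505327 11" by (rule det_mono[OF b6]) simp
  have s6: "ent 507375 = ent 505327" using ent_add[OF d6] by simp
  show ?thesis using s0 s1 s2 s3 s4 s5 s6 by linarith
qed

lemma clo_131108: "ent 131108 = ent 179494"
proof -
  have b0: "det 4 12" using det_WS[of 3 1] by simp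
  have d0: "det 131108 12" by (rule det_mono[OF b0]) simp
  have s0: "ent 135204 = ent 131108" using ent_add[OF d0] by simp
  have b1: "det 4 13" using det_WS[of 3 2] by simp
  have d1: "det 135204 13" by (rule det_mono[OF b1]) simp
  have s1: "ent 143396 = ent 135204" using ent_add[OF d1] by simp
  have b2: "det 4 15" using det_WS[of 3 4] by simp
  have d2: "det 143396 15" by (rule det_mono[OF b2]) simp
  have s2: "ent 176164 = ent 143396" using ent_add[OF d2] by simp
  have b3: "det 139296 1" by (rule rep2) (simp_all add: bit_iff_odd)
  have d3: "det 176164 1" by (rule det_mono[OF b3]) simp
  have s3: "ent 176166 = ent 176164" using ent_add[OF d3] by simp
  have b4: "det 2 8" using det_WS[of 2 1] by simp
  have d4: "det 176166 8" by (rule det_mono[OF b4]) simp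
  have s4: "ent 176422 = ent 176166" using ent_add[OF d4] by simp
  have b5: "det 2 10" using det_WS[of 2 3] by simp
  have d5: "det 176422 10" by (rule det_mono[OF b5]) simp
  have s5: "ent 177446 = ent 176422" using ent_add[OF d5] by simp
  have b6: "det 2 11" using det_WS[of 2 4] by simp
  have d6: "det 177446 11" by (rule det_mono[OF b6]) simp
  have s6: "ent 179494 = ent 177446" using ent_add[OF d6] by simp
  show ?thesis using s0 s1 s2 s3 s4 s5 s6 by linarith
qed

lemma clo_34817: "ent 34817 = ent 493801"
proof -
  have b0: "det 1 5" using det_WS[of 1 2] by simp
  have d0: "det 34817 5" by (rule det_mono[OF b0]) simp
  have s0: "ent 34849 = ent 34817" using ent_add[OF d0] by simp
  have b1: "det 1 6" using det_WS[of 1 3] by simp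
  have d1: "det 34849 6" by (rule det_mono[OF b1]) simp
  have s1: "ent 34913 = ent 34849" using ent_add[OF d1] by simp
  have b2: "det 1 7" using det_WS[of 1 4] by simp
  have d2: "det 34913 7" by (rule det_mono[OF b2]) simp
  have s2: "ent 35041 = ent 34913" using ent_add[OF d2] by simp
  have b3: "det 34944 3" by (rule rep4) (simp_all add: bit_iff_odd)
  have d3: "det 35041 3" by (rule det_mono[OF b3]) simp
  have s3: "ent 35049 = ent 35041" using ent_add[OF d3] by simp
  have b4: "det 8 16" using det_WS[of 4 1] by simp
  have d4: "det 35049 16" by (rule det_mono[OF b4]) simp
  have s4: "ent 100585 = ent 35049" using ent_add[OF d4] by simp
  have b5: "det 8 17" using det_WS[of 4 2] by simp
  have d5: "det 100585 17" by (rule det_mono[OF b5]) simp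
  have s5: "ent 231657 = ent 100585" using ent_add[OF d5] by simp
  have b6: "det 8 18" using det_WS[of 4 3] by simp
  have d6: "det 231657 18" by (rule det_mono[OF b6]) simp
  have s6: "ent 493801 = ent 231657" using ent_add[OF d6] by simp
  show ?thesis using s0 s1 s2 s3 s4 s5 s6 by linarith
qed

lemma clo_2: "ent 2 = ent 3330"
proof -
  have b0: "det 2 8" using det_WS[of 2 1] by simp
  have d0: "det 2 8" by (rule det_mono[OF b0]) simp
  have s0: "ent 258 = ent 2" using ent_add[OF d0] by simp
  have b1: "det 2 10" using det_WS[of 2 3] by simp
  have d1: "det 258 10" by (rule det_mono[OF b1]) simp
  have s1: "ent 1282 = ent 258" using ent_add[OF d1] by simp
  have b2: "det 2 11" using det_WS[of 2 4] by simp
  have d2: "det 1282 11" by (rule det_mono[OF b2]) simp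
  have s2: "ent 3330 = ent 1282" using ent_add[OF d2] by simp
  show ?thesis using s0 s1 s2 by linarith
qed

lemma main_bound: "3 * real B \<le> 4 * \<alpha> + 6 * \<beta>"
proof -
  have f1: "ent 263168 + ent 0 \<le> ent 1024 + ent 262144" using ent_submod[of 1024 262144] by simp
  have f2: "ent 263169 + ent 0 \<le> ent 1 + ent 263168" using ent_submod[of 1 263168] by simp
  have f3: "ent 1 \<le> \<alpha>" using ent_W[of 1] by simp
  have f4: "ent 1024 \<le> \<beta>" using ent_S[of 2 3] by simp
  have f5: "ent 262144 \<le> \<beta>" using ent_S[of 4 3] by simp
  have f6: "ent 308453 \<le> \<alpha> + 2 * \<beta>" using f1 f2 f3 f4 f5 ent_nonneg[of 0] clo_263169 by linarith
  have f7: "ent 458760 \<le> \<alpha>" using ent_W[of 4] clo_8 by simp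
  have f8: "ent 499179 + ent 71905 \<le> ent 73187 + ent 497897" using ent_submod[of 73187 497897] by simp
  have f10: "ent 507375 + ent 71905 \<le> ent 73187 + ent 497897" using f8 clo_499179 by linarith
  have f11: "ent 441831 + ent 308260 \<le> ent 308453 + ent 441638" using ent_submod[of 308453 441638] by simp
  have f13: "ent 507375 + ent 308260 \<le> ent 308453 + ent 441638" using f11 clo_441831 by linarith
  have f14: "ent 1088 + ent 0 \<le> ent 64 + ent 1024" using ent_submod[of 64 1024] by simp
  have f15: "ent 1096 + ent 0 \<le> ent 8 + ent 1088" using ent_submod[of 8 1088] by simp
  have f16: "ent 8 \<le> \<alpha>" using ent_W[of 4] by simp
  have f17: "ent 64 \<le> \<beta>" using ent_S[of 1 3] by simp
  have f18: "ent 1024 \<le> \<beta>" using ent_S[of 2 3] by simp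
  have f19: "ent 504908 \<le> \<alpha> + 2 * \<beta>" using f14 f15 f16 f17 f18 ent_nonneg[of 0] clo_1096 by linarith
  have f20: "ent 113926 + ent 3330 \<le> ent 48390 + ent 68866" using ent_submod[of 48390 68866] by simp
  have f22: "ent 507375 + ent 3330 \<le> ent 48390 + ent 68866" using f20 clo_113926 by linarith
  have f23: "ent 65792 + ent 0 \<le> ent 256 + ent 65536" using ent_submod[of 256 65536] by simp
  have f24: "ent 65796 + ent 0 \<le> ent 4 + ent 65792" using ent_submod[of 4 65792] by simp
  have f25: "ent 4 \<le> \<alpha>" using ent_W[of 3] by simp
  have f26: "ent 256 \<le> \<beta>" using ent_S[of 2 1] by simp
  have f27: "ent 65536 \<le> \<beta>" using ent_S[of 4 1] by simp
  have f28: "ent 111077 \<le> \<alpha> + 2 * \<beta>" using f23 f24 f25 f26 f27 ent_nonneg[of 0] clo_65796 by linarith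
  have f29: "ent 46180 + ent 46084 \<le> ent 46148 + ent 46116" using ent_submod[of 46148 46116] by simp
  have f31: "ent 46180 + ent 46084 \<le> ent 46148 + ent 46116" using f29 by linarith
  have f32: "ent 113125 + ent 66017 \<le> ent 111077 + ent 68065" using ent_submod[of 111077 68065] by simp
  have f34: "ent 507375 + ent 66017 \<le> ent 111077 + ent 68065" using f32 clo_113125 by linarith
  have f35: "ent 69632 + ent 0 \<le> ent 4096 + ent 65536" using ent_submod[of 4096 65536] by simp
  have f36: "ent 69634 + ent 0 \<le> ent 2 + ent 69632" using ent_submod[of 2 69632] by simp
  have f37: "ent 2 \<le> \<alpha>" using ent_W[of 2] by simp
  have f38: "ent 4096 \<le> \<beta>" using ent_S[of 3 1] by simp
  have f39: "ent 65536 \<le> \<beta>" using ent_S[of 4 1] by simp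
  have f40: "ent 73187 \<le> \<alpha> + 2 * \<beta>" using f35 f36 f37 f38 f39 ent_nonneg[of 0] clo_69634 by linarith
  have f41: "ent 504940 + ent 46148 \<le> ent 504908 + ent 46180" using ent_submod[of 504908 46180] by simp
  have f43: "ent 507375 + ent 46148 \<le> ent 504908 + ent 46180" using f41 clo_504940 by linarith
  have f44: "ent 441638 + ent 46116 \<le> ent 308260 + ent 179494" using ent_submod[of 308260 179494] by simp
  have f46: "ent 441638 + ent 46116 \<le> ent 308260 + ent 179494" using f44 by linarith
  have f47: "ent 460009 + ent 225 \<le> ent 458985 + ent 1249" using ent_submod[of 458985 1249] by simp
  have f49: "ent 507375 + ent 225 \<le> ent 458985 + ent 1249" using f47 clo_460009 by linarith
  have f50: "ent 1249 + ent 0 \<le> ent 225 + ent 1024" using ent_submod[of 225 1024] by simp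
  have f52: "ent 1249 + ent 0 \<le> ent 225 + ent 1024" using f50 by linarith
  have f53: "ent 131104 + ent 0 \<le> ent 32 + ent 131072" using ent_submod[of 32 131072] by simp
  have f54: "ent 131108 + ent 0 \<le> ent 4 + ent 131104" using ent_submod[of 4 131104] by simp
  have f55: "ent 4 \<le> \<alpha>" using ent_W[of 3] by simp
  have f56: "ent 32 \<le> \<beta>" using ent_S[of 1 2] by simp
  have f57: "ent 131072 \<le> \<beta>" using ent_S[of 4 2] by simp
  have f58: "ent 179494 \<le> \<alpha> + 2 * \<beta>" using f53 f54 f55 f56 f57 ent_nonneg[of 0] clo_131108 by linarith
  have f59: "ent 68065 + ent 65761 \<le> ent 66017 + ent 67809" using ent_submod[of 66017 67809] by simp
  have f61: "ent 68065 + ent 65761 \<le> ent 66017 + ent 67809" using f59 by linarith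
  have f62: "ent 34816 + ent 0 \<le> ent 2048 + ent 32768" using ent_submod[of 2048 32768] by simp
  have f63: "ent 34817 + ent 0 \<le> ent 1 + ent 34816" using ent_submod[of 1 34816] by simp
  have f64: "ent 1 \<le> \<alpha>" using ent_W[of 1] by simp
  have f65: "ent 2048 \<le> \<beta>" using ent_S[of 2 4] by simp
  have f66: "ent 32768 \<le> \<beta>" using ent_S[of 3 4] by simp
  have f67: "ent 493801 \<le> \<alpha> + 2 * \<beta>" using f62 f63 f64 f65 f66 ent_nonneg[of 0] clo_34817 by linarith
  have f68: "ent 68866 + ent 0 \<le> ent 3330 + ent 65536" using ent_submod[of 3330 65536] by simp
  have f70: "ent 68866 + ent 0 \<le> ent 3330 + ent 65536" using f68 by linarith
  have f71: "ent 458985 + ent 65536 \<le> ent 458760 + ent 65761" using ent_submod[of 458760 65761] by simp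
  have f73: "ent 458985 + ent 65536 \<le> ent 458760 + ent 65761" using f71 by linarith
  have f74: "ent 3330 \<le> \<alpha>" using ent_W[of 2] clo_2 by simp
  have f75: "ent 497897 + ent 67809 \<le> ent 71905 + ent 493801" using ent_submod[of 71905 493801] by simp
  have f77: "ent 497897 + ent 67809 \<le> ent 71905 + ent 493801" using f75 by linarith
  have f78: "ent 48390 + ent 1024 \<le> ent 3330 + ent 46084" using ent_submod[of 3330 46084] by simp
  have f80: "ent 48390 + ent 1024 \<le> ent 3330 + ent 46084" using f78 by linarith
  have fullB: "ent 507375 = real B" by (rule ent_full[of 1 2 3]) simp_all
  show ?thesis using f6 f7 f10 f13 f19 f22 f28 f31 f34 f40 f43 f46 f49 f52 f58 f61 f67 f70 f73 f74 f77 f80 fullB ent_nonneg[of 0] by linarith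
qed

end

theorem mainTheorem5:
  fixes W :: "nat \<Rightarrow> (nat \<Rightarrow> 'a::{finite,field}) \<Rightarrow> 'w"
    and h :: "nat \<Rightarrow> nat set \<Rightarrow> nat \<Rightarrow> 'w \<Rightarrow> 'h"
    and \<alpha> \<beta> :: real and B :: nat
  assumes "exact_repair_code 4 3 3 \<alpha> \<beta> B W h"
    and "3 / 2 * \<beta> < \<alpha>" and "\<alpha> < 3 * \<beta>"
  shows "3 * real B \<le> 4 * \<alpha> + 6 * \<beta>"
proof -
  interpret rc W h \<alpha> \<beta> B by unfold_locales (rule assms(1))
  show ?thesis by (rule main_bound)
qed

end
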